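(* In every instance of the Balancing with Friendship game with $m=2$ machines: - every state minimizing the social cost is a strong Nash equilibrium; - every strong Nash equilibrium $\vec s$ satisfies $c(\vec s)\le\frac43c(\vec s^* )$.
   Context: An instance of the Balancing with Friendship (BwF) game consists of: - players $N=\{1,\dots,n\}$; - machines $M=\{1,\dots,m\}$; - a simple undirected graph $G=(N,E)$ (the friendship graph). A state is $\vec s\in M^n$, with $X_k(\vec s)=\{i:s_i=k\}$ and $x_k(\vec s)=|X_k(\vec s)|$. The cost of player $i$ with $s_i=k$ is $x_k(\vec s)$ plus the number of neighbours of $i$ in $G$ not on machine $k$. The social cost is $c(\vec s)=\sum_ic_i(\vec s)$, and $\vec s^*$ minimizes $c$. A state $\vec s$ is a strong Nash equilibrium if for every nonempty coalition $C\subseteq N$ and every joint deviation $\vec s_C'\in M^C$, some $i\in C$ has $c_i(\vec s)\le c_i(\vec s_C',\vec s_{-C})$. *)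

theory Defs
  imports Complex_Main
begin

text \<open>Players are {..<n}, machines are {..<m}
(0-indexed renderings of {1..n}, {1..m}). The friendship graph is a simple undirected
graph on the players, given by a symmetric irreflexive edge relation E on {..<n}.
A state is a function s assigning each player i < n a machine s i < m
(values outside the player set are irrelevant).\<close>

definition simple_graph :: "nat \<Rightarrow> (nat \<Rightarrow> nat \<Rightarrow> bool) \<Rightarrow> bool" where
  "simple_graph n E \<longleftrightarrow>
     (\<forall>i j. E i j \<longrightarrow> i < n \<and> j < n) \<and>
     (\<forall>i j. E i j \<longrightarrow> E j i) \<and>
     (\<forall>i. \<not> E i i)"

definition is_state :: "nat \<Rightarrow> nat \<Rightarrow> (nat \<Rightarrow> nat) \<Rightarrow> bool" where
  "is_state n m s \<longleftrightarrow> (\<forall>i<n. s i < m)"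

definition load :: "nat \<Rightarrow> (nat \<Rightarrow> nat) \<Rightarrow> nat \<Rightarrow> nat" where
  "load n s k = card {i. i < n \<and> s i = k}"

definition player_cost :: "nat \<Rightarrow> (nat \<Rightarrow> nat \<Rightarrow> bool) \<Rightarrow> (nat \<Rightarrow> nat) \<Rightarrow> nat \<Rightarrow> nat" where
  "player_cost n E s i = load n s (s i) + card {j. j < n \<and> E i j \<and> s j \<noteq> s i}"

definition social_cost :: "nat \<Rightarrow> (nat \<Rightarrow> nat \<Rightarrow> bool) \<Rightarrow> (nat \<Rightarrow> nat) \<Rightarrow> nat" where
  "social_cost n E s = (\<Sum>i<n. player_cost n E s i)"

definition social_optimum :: "nat \<Rightarrow> nat \<Rightarrow> (nat \<Rightarrow> nat \<Rightarrow> bool) \<Rightarrow> (nat \<Rightarrow> nat) \<Rightarrow> bool" where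
  "social_optimum n m E s \<longleftrightarrow> is_state n m s \<and>
     (\<forall>s'. is_state n m s' \<longrightarrow> social_cost n E s \<le> social_cost n E s')"

definition deviate :: "nat set \<Rightarrow> (nat \<Rightarrow> nat) \<Rightarrow> (nat \<Rightarrow> nat) \<Rightarrow> (nat \<Rightarrow> nat)" where
  "deviate C t s = (\<lambda>i. if i \<in> C then t i else s i)"

definition strong_NE :: "nat \<Rightarrow> nat \<Rightarrow> (nat \<Rightarrow> nat \<Rightarrow> bool) \<Rightarrow> (nat \<Rightarrow> nat) \<Rightarrow> bool" where
  "strong_NE n m E s \<longleftrightarrow> is_state n m s \<and>
     (\<forall>C t. C \<noteq> {} \<longrightarrow> C \<subseteq> {..<n} \<longrightarrow> (\<forall>i\<in>C. t i < m) \<longrightarrow>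
        (\<exists>i\<in>C. player_cost n E s i \<le> player_cost n E (deviate C t s) i))"

end

theory Submission
  imports Defs
begin

definition ww :: "(nat\<Rightarrow>nat\<Rightarrow>bool) \<Rightarrow> (nat\<Rightarrow>nat) \<Rightarrow> nat \<Rightarrow> nat \<Rightarrow> int" where
  "ww E s i j = (if s i = s j \<or> E i j then 1 else 0)"

definition sg :: "(nat\<Rightarrow>nat\<Rightarrow>bool) \<Rightarrow> (nat\<Rightarrow>nat) \<Rightarrow> nat \<Rightarrow> nat \<Rightarrow> int" where
  "sg E s i j = (if E i j \<or> i = j then 0 else if s i = s j then -1 else 1)"

definition FF :: "(nat\<Rightarrow>nat\<Rightarrow>bool) \<Rightarrow> (nat\<Rightarrow>nat) \<Rightarrow> nat set \<Rightarrow> nat set \<Rightarrow> int" where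
  "FF E s X Y = (\<Sum>i\<in>X. \<Sum>j\<in>Y. sg E s i j)"

lemma card_ind: "int (card {j::nat. j < n \<and> P j}) = (\<Sum>j<n. if P j then 1 else 0)"
proof -
  have "{j. j < n \<and> P j} = {j\<in>{..<n}. P j}" by auto
  moreover have "(\<Sum>j<n. if P j then 1 else 0) = (\<Sum>j\<in>{j\<in>{..<n}. P j}. (1::int))"
    by (rule sum.inter_filter[symmetric]) simp
  ultimately show ?thesis by simp
qed

lemma pc_eq: "int (player_cost n E s i) = (\<Sum>j<n. ww E s i j)"
proof -
  have eq: "{j. j<n \<and> (s i = s j \<or> E i j)} = {j. j<n \<and> s j = s i} \<union> {j. j<n \<and> E i j \<and> s j \<noteq> s i}" by auto
  have "card {j. j<n \<and> (s i = s j \<or> E i j)} = card {j. j<n \<and> s j = s i} + card {j. j<n \<and> E i j \<and> s j \<noteq> s i}"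
    unfolding eq by (rule card_Un_disjoint) auto
  then have "player_cost n E s i = card {j. j<n \<and> (s i = s j \<or> E i j)}"
    unfolding player_cost_def load_def by simp
  then show ?thesis unfolding ww_def by (simp add: card_ind)
qed

lemma sc_eq: "int (social_cost n E s) = (\<Sum>i<n. \<Sum>j<n. ww E s i j)"
  unfolding social_cost_def by (simp add: pc_eq)

lemma sg_sym: "simple_graph n E \<Longrightarrow> sg E s i j = sg E s j i"
  unfolding sg_def simple_graph_def by auto

lemma FF_sym: "simple_graph n E \<Longrightarrow> FF E s X Y = FF E s Y X"
  unfolding FF_def by (subst sum.swap) (simp add: sg_sym)

lemma flip_w:
  assumes "\<forall>i<n. s i < 2" "\<forall>i<n. s' i < 2" "i < n" "j < n"
    "T = {k. k < n \<and> s' k \<noteq> s k}"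
  shows "ww E s' i j - ww E s i j = (if (i\<in>T) = (j\<in>T) then 0 else sg E s i j)"
proof -
  have a: "s i < 2" "s j < 2" "s' i < 2" "s' j < 2" using assms by auto
  show ?thesis using a assms(3,4,5) unfolding ww_def sg_def by auto
qed

lemma flip_inner:
  assumes "\<forall>i<n. s i < 2" "\<forall>i<n. s' i < 2" "i < n"
    "T = {k. k < n \<and> s' k \<noteq> s k}"
  shows "(\<Sum>j<n. ww E s' i j - ww E s i j) =
     (if i \<in> T then (\<Sum>j\<in>{..<n} - T. sg E s i j) else (\<Sum>j\<in>T. sg E s i j))"
proof -
  have "(\<Sum>j<n. ww E s' i j - ww E s i j) = (\<Sum>j<n. if (i\<in>T) = (j\<in>T) then 0 else sg E s i j)"
    using flip_w[OF assms(1,2,3) _ assms(4)] by (intro sum.cong) auto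
  also have "\<dots> = (if i \<in> T then (\<Sum>j\<in>{..<n} - T. sg E s i j) else (\<Sum>j\<in>T. sg E s i j))"
  proof (cases "i \<in> T")
    case True
    then have "(\<Sum>j<n. if (i\<in>T) = (j\<in>T) then 0 else sg E s i j) = (\<Sum>j<n. if j\<in>T then 0 else sg E s i j)"
      by simp
    also have "\<dots> = (\<Sum>j\<in>{..<n} - T. sg E s i j)"
      by (simp add: sum.If_cases Diff_eq)
    finally show ?thesis using True by simp
  next
    case False
    then have "(\<Sum>j<n. if (i\<in>T) = (j\<in>T) then 0 else sg E s i j) = (\<Sum>j<n. if j\<in>T then sg E s i j else 0)"
      by (intro sum.cong) auto
    also have "\<dots> = (\<Sum>j\<in>T. sg E s i j)"
    proof -
      have "{..<n} \<inter> T = T" using assms(4) by auto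
      then show ?thesis by (simp add: sum.If_cases)
    qed
    finally show ?thesis using False by simp
  qed
  finally show ?thesis .
qed

lemma flip_pc:
  assumes "\<forall>i<n. s i < 2" "\<forall>i<n. s' i < 2" "i \<in> T"
    "T = {k. k < n \<and> s' k \<noteq> s k}"
  shows "int (player_cost n E s' i) - int (player_cost n E s i) = (\<Sum>j\<in>{..<n} - T. sg E s i j)"
proof -
  have "i < n" using assms(3,4) by auto
  have "int (player_cost n E s' i) - int (player_cost n E s i) = (\<Sum>j<n. ww E s' i j - ww E s i j)"
    by (simp add: pc_eq sum_subtractf)
  also have "\<dots> = (\<Sum>j\<in>{..<n} - T. sg E s i j)"
    using flip_inner[OF assms(1,2) \<open>i<n\<close> assms(4)] assms(3) by simp
  finally show ?thesis .
qed

lemma flip_sc: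
  assumes "simple_graph n E" "\<forall>i<n. s i < 2" "\<forall>i<n. s' i < 2"
    "T = {k. k < n \<and> s' k \<noteq> s k}"
  shows "int (social_cost n E s') - int (social_cost n E s) = 2 * FF E s T ({..<n} - T)"
proof -
  have TU: "T \<subseteq> {..<n}" using assms(4) by auto
  have "int (social_cost n E s') - int (social_cost n E s) = (\<Sum>i<n. \<Sum>j<n. ww E s' i j - ww E s i j)"
    by (simp add: sc_eq sum_subtractf)
  also have "\<dots> = (\<Sum>i<n. if i \<in> T then (\<Sum>j\<in>{..<n} - T. sg E s i j) else (\<Sum>j\<in>T. sg E s i j))"
    using flip_inner[OF assms(2,3) _ assms(4)] by (intro sum.cong) auto
  also have "\<dots> = FF E s T ({..<n} - T) + FF E s ({..<n} - T) T"
  proof -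
    have "{..<n} \<inter> T = T" using TU by auto
    then show ?thesis unfolding FF_def by (simp add: sum.If_cases Diff_eq)
  qed
  also have "\<dots> = 2 * FF E s T ({..<n} - T)"
    using FF_sym[OF assms(1)] by simp
  finally show ?thesis .
qed

lemma psi_step:
  assumes g: "simple_graph n E" and X: "X \<subseteq> {..<n}" and i: "i \<in> X"
  shows "2 * FF E s X ({..<n} - X) + FF E s X X =
     2 * FF E s (X - {i}) ({..<n} - (X - {i})) + FF E s (X - {i}) (X - {i})
     + 2 * (\<Sum>j\<in>{..<n} - X. sg E s i j)"
proof -
  define X' where "X' = X - {i}"
  define G where "G = (\<Sum>j\<in>{..<n} - X. sg E s i j)"
  define H where "H = (\<Sum>j\<in>X'. sg E s i j)"
  have fX: "finite X" using X finite_subset by blast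
  have fX': "finite X'" using fX X'_def by simp
  have iU: "i < n" using X i by auto
  have H2: "(\<Sum>a\<in>X'. sg E s a i) = H" unfolding H_def using sg_sym[OF g] by simp
  have 1: "FF E s X ({..<n} - X) = G + FF E s X' ({..<n} - X)"
    unfolding FF_def G_def X'_def using fX i by (simp add: sum.remove)
  have 2: "FF E s X X = (\<Sum>j\<in>X. sg E s i j) + FF E s X' X"
    unfolding FF_def X'_def by (rule sum.remove[OF fX i])
  have 3: "(\<Sum>j\<in>X. sg E s i j) = H"
    unfolding H_def X'_def by (subst sum.remove[OF fX i]) (simp add: sg_def)
  have 4: "FF E s X' X = (\<Sum>a\<in>X'. sg E s a i) + FF E s X' X'"
  proof -
    have "FF E s X' X = (\<Sum>a\<in>X'. sg E s a i + (\<Sum>j\<in>X'. sg E s a j))"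
      unfolding FF_def X'_def by (intro sum.cong refl) (rule sum.remove[OF fX i])
    then show ?thesis unfolding FF_def by (simp add: sum.distrib)
  qed
  have 5: "FF E s X' ({..<n} - X') = (\<Sum>a\<in>X'. sg E s a i) + FF E s X' ({..<n} - X)"
  proof -
    have e: "{..<n} - X' = insert i ({..<n} - X)" using X i iU unfolding X'_def by auto
    have "FF E s X' ({..<n} - X') = (\<Sum>a\<in>X'. sg E s a i + (\<Sum>j\<in>{..<n} - X. sg E s a j))"
      unfolding FF_def e using i by (intro sum.cong refl) (simp add: sum.insert)
    then show ?thesis unfolding FF_def by (simp add: sum.distrib)
  qed
  show ?thesis unfolding X'_def[symmetric] G_def[symmetric] using 1 2 3 4 5 H2 by simp
qed

lemma psi:
  assumes g: "simple_graph n E" and ne: "strong_NE n 2 E s" and X: "X \<subseteq> {..<n}"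
  shows "0 \<le> 2 * FF E s X ({..<n} - X) + FF E s X X"
proof -
  have st: "\<forall>i<n. s i < 2" using ne unfolding strong_NE_def is_state_def by auto
  have "finite X" using X finite_subset by blast
  then show ?thesis using X
  proof (induction X rule: finite_psubset_induct)
    case (psubset X)
    show ?case
    proof (cases "X = {}")
      case True then show ?thesis by (simp add: FF_def)
    next
      case False
      define t where "t = (\<lambda>i. 1 - s i)"
      define s' where "s' = deviate X t s"
      have t2: "\<forall>i\<in>X. t i < 2" unfolding t_def by auto
      have "\<exists>i\<in>X. player_cost n E s i \<le> player_cost n E s' i"
        using ne False psubset.prems t2 unfolding strong_NE_def s'_def by blast
      then obtain i where i: "i\<in>X" "player_cost n E s i \<le> player_cost n E s' i" by blast
      have st': "\<forall>i<n. s' i < 2" unfolding s'_def deviate_def t_def using st by auto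
      have T: "X = {k. k<n \<and> s' k \<noteq> s k}"
      proof (intro set_eqI iffI)
        fix k assume "k \<in> X"
        then have kn: "k < n" using psubset.prems by auto
        then have "s k < 2" using st by auto
        then show "k \<in> {k. k<n \<and> s' k \<noteq> s k}" using kn \<open>k \<in> X\<close>
          unfolding s'_def deviate_def t_def by auto arith
      next
        fix k assume "k \<in> {k. k<n \<and> s' k \<noteq> s k}"
        then show "k \<in> X" unfolding s'_def deviate_def by (auto split: if_splits)
      qed
      have G: "0 \<le> (\<Sum>j\<in>{..<n} - X. sg E s i j)"
        using flip_pc[OF st st' i(1) T, of E] i(2) by linarith
      have IH: "0 \<le> 2 * FF E s (X - {i}) ({..<n} - (X - {i})) + FF E s (X - {i}) (X - {i})"
        using psubset.IH[of "X - {i}"] i(1) psubset.prems by auto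
      show ?thesis using psi_step[OF g psubset.prems i(1), of s] G IH by linarith
    qed
  qed
qed

lemma opt_SNE:
  assumes g: "simple_graph n E" and opt: "social_optimum n 2 E s"
  shows "strong_NE n 2 E s"
proof -
  have st0: "is_state n 2 s" using opt unfolding social_optimum_def by auto
  then have st: "\<forall>i<n. s i < 2" unfolding is_state_def by auto
  have "\<exists>i\<in>C. player_cost n E s i \<le> player_cost n E (deviate C t s) i"
    if C: "C \<noteq> {}" "C \<subseteq> {..<n}" "\<forall>i\<in>C. t i < 2" for C t
  proof (rule ccontr)
    assume "\<not> ?thesis"
    then have imp: "\<forall>i\<in>C. player_cost n E (deviate C t s) i < player_cost n E s i" by auto
    define s' where "s' = deviate C t s"
    have st': "\<forall>i<n. s' i < 2" unfolding s'_def deviate_def using st C by auto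
    define T where "T = {k. k<n \<and> s' k \<noteq> s k}"
    have TC: "T \<subseteq> C" unfolding T_def s'_def deviate_def by auto
    show False
    proof (cases "T = {}")
      case True
      obtain i where i: "i \<in> C" using C by auto
      have eq: "\<forall>j<n. s' j = s j" using True unfolding T_def by auto
      have "i < n" using i C by auto
      have "int (player_cost n E s' i) = int (player_cost n E s i)"
        unfolding pc_eq using eq \<open>i<n\<close> unfolding ww_def by (intro sum.cong) auto
      then show False using imp i unfolding s'_def by (metis less_irrefl of_nat_eq_iff)
    next
      case False
      have fT: "finite T" unfolding T_def by simp
      have "FF E s T ({..<n} - T) = (\<Sum>i\<in>T. int (player_cost n E s' i) - int (player_cost n E s i))"
        unfolding FF_def using flip_pc[OF st st' _ T_def] by simp
      also have "\<dots> \<le> (\<Sum>i\<in>T. -1)"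
        using imp TC unfolding s'_def by (intro sum_mono) force
      also have "\<dots> < 0" using fT False by (simp add: card_gt_0_iff)
      finally have "FF E s T ({..<n} - T) < 0" .
      then have "social_cost n E s' < social_cost n E s"
        using flip_sc[OF g st st' T_def] by linarith
      moreover have "is_state n 2 s'" using st' unfolding is_state_def by auto
      ultimately show False using opt unfolding social_optimum_def by force
    qed
  qed
  then show ?thesis unfolding strong_NE_def using st0 by blast
qed

definition KK :: "(nat\<Rightarrow>nat\<Rightarrow>bool) \<Rightarrow> (nat\<Rightarrow>nat) \<Rightarrow> nat \<Rightarrow> nat \<Rightarrow> int" where
  "KK E s i j = (if s i \<noteq> s j \<and> \<not> E i j then 1 else 0)"

lemma sc_K: "int (social_cost n E s) = int n * int n - (\<Sum>i<n. \<Sum>j<n. KK E s i j)"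
proof -
  have "int (social_cost n E s) + (\<Sum>i<n. \<Sum>j<n. KK E s i j) = (\<Sum>i<n. \<Sum>j<n. ww E s i j + KK E s i j)"
    by (simp add: sc_eq sum.distrib)
  also have "\<dots> = (\<Sum>i<n. \<Sum>j<n. 1)" unfolding ww_def KK_def by (intro sum.cong) auto
  finally show ?thesis by simp
qed

lemma FF_le_K: "finite X \<Longrightarrow> FF E s X X \<le> (\<Sum>i\<in>X. \<Sum>j\<in>X. KK E s i j)"
  unfolding FF_def by (intro sum_mono) (auto simp: sg_def KK_def)

lemma K_split:
  assumes "T \<subseteq> {..<n}"
  shows "(\<Sum>i\<in>T. \<Sum>j\<in>T. KK E s i j) + (\<Sum>i\<in>{..<n}-T. \<Sum>j\<in>{..<n}-T. KK E s i j)
     \<le> (\<Sum>i<n. \<Sum>j<n. KK E s i j)"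
proof -
  have a: "(\<Sum>i\<in>T. \<Sum>j\<in>T. KK E s i j) \<le> (\<Sum>i\<in>T. \<Sum>j<n. KK E s i j)"
    using assms by (intro sum_mono sum_mono2) (auto simp: KK_def)
  have b: "(\<Sum>i\<in>{..<n}-T. \<Sum>j\<in>{..<n}-T. KK E s i j) \<le> (\<Sum>i\<in>{..<n}-T. \<Sum>j<n. KK E s i j)"
    by (intro sum_mono sum_mono2) (auto simp: KK_def)
  have c: "(\<Sum>i<n. \<Sum>j<n. KK E s i j) = (\<Sum>i\<in>{..<n}-T. \<Sum>j<n. KK E s i j) + (\<Sum>i\<in>T. \<Sum>j<n. KK E s i j)"
    using assms by (intro sum.subset_diff) auto
  show ?thesis using a b c by linarith
qed

lemma sc_half:
  assumes "\<forall>i<n. s i < 2"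
  shows "int n * int n \<le> 2 * int (social_cost n E s)"
proof -
  define v where "v i = (if s i = 0 then 1 else -1 :: int)" for i
  have pw: "2 * ww E s i j - 1 \<ge> v i * v j" if "i < n" "j < n" for i j
  proof -
    have "s i < 2" "s j < 2" using assms that by auto
    then show ?thesis unfolding ww_def v_def by auto
  qed
  have "0 \<le> (\<Sum>i<n. v i) * (\<Sum>j<n. v j)" by simp
  also have "\<dots> = (\<Sum>i<n. \<Sum>j<n. v i * v j)" by (rule sum_product)
  also have "\<dots> \<le> (\<Sum>i<n. \<Sum>j<n. 2 * ww E s i j - 1)" using pw by (intro sum_mono) auto
  also have "\<dots> = 2 * int (social_cost n E s) - int n * int n"
    by (simp add: sc_eq sum_subtractf sum_distrib_left)
  finally show ?thesis by simp
qed

lemma poa: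
  assumes g: "simple_graph n E" and ne: "strong_NE n 2 E s" and opt: "social_optimum n 2 E sopt"
  shows "3 * int (social_cost n E s) \<le> 4 * int (social_cost n E sopt)"
proof -
  have st: "\<forall>i<n. s i < 2" using ne unfolding strong_NE_def is_state_def by auto
  have sto: "\<forall>i<n. sopt i < 2" using opt unfolding social_optimum_def is_state_def by auto
  define T where "T = {k. k<n \<and> sopt k \<noteq> s k}"
  define R where "R = {..<n} - T"
  have TU: "T \<subseteq> {..<n}" unfolding T_def by auto
  have RT: "{..<n} - R = T" unfolding R_def using TU by auto
  have pT: "0 \<le> 2 * FF E s T R + FF E s T T" using psi[OF g ne TU] unfolding R_def .
  have pR: "0 \<le> 2 * FF E s R T + FF E s R R" using psi[OF g ne, of R] RT unfolding R_def by auto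
  have sym: "FF E s R T = FF E s T R" using FF_sym[OF g] by simp
  have fl: "int (social_cost n E sopt) - int (social_cost n E s) = 2 * FF E s T R"
    using flip_sc[OF g st sto T_def] unfolding R_def .
  have K1: "FF E s T T + FF E s R R \<le> (\<Sum>i<n. \<Sum>j<n. KK E s i j)"
  proof -
    have "finite T" "finite R" unfolding T_def R_def by auto
    then show ?thesis using FF_le_K[of T E s] FF_le_K[of R E s] K_split[OF TU, of E s]
      unfolding R_def by linarith
  qed
  have h: "int n * int n \<le> 2 * int (social_cost n E sopt)" using sc_half[OF sto] .
  show ?thesis using pT pR sym fl K1 h sc_K[of n E s] by linarith
qed

theorem theorem16:
  fixes n :: nat and E :: "nat \<Rightarrow> nat \<Rightarrow> bool"
  assumes "simple_graph n E"
  shows "(\<forall>s. social_optimum n 2 E s \<longrightarrow> strong_NE n 2 E s) \<and>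
         (\<forall>s sopt. strong_NE n 2 E s \<longrightarrow> social_optimum n 2 E sopt \<longrightarrow>
            real (social_cost n E s) \<le> 4 / 3 * real (social_cost n E sopt))"
proof (intro conjI allI impI)
  fix s assume "social_optimum n 2 E s"
  then show "strong_NE n 2 E s" using opt_SNE[OF assms] by blast
next
  fix s sopt assume "strong_NE n 2 E s" "social_optimum n 2 E sopt"
  then have "3 * int (social_cost n E s) \<le> 4 * int (social_cost n E sopt)"
    using poa[OF assms] by blast
  then have "3 * real (social_cost n E s) \<le> 4 * real (social_cost n E sopt)"
    by linarith
  then show "real (social_cost n E s) \<le> 4 / 3 * real (social_cost n E sopt)" by simp
qed

end
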